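(* Assume $C\succ 0$ and $A_1,\dots,A_m$ are linearly independent. Let $X(t)$ be a differentiable solution of the second-ansatz dynamics $$\mathrm{vec}(\dot X) = -\bigl(I - G\mathcal{A}^T(\mathcal{A}G\mathcal{A}^T)^{-1} \mathcal{A}\bigr)G\,\mathrm{vec}(C),\qquad G=X\otimes X,$$ with $X(0)\succ 0$ linearly feasible. Then $X(t)\succ 0$ for every finite time $t\ge 0$ (and $X(t)$ remains linearly feasible).
   Context: We consider the SDP $\min\{\mathrm{tr}(CX): \mathrm{tr}(A_\ell X)=b_\ell\ \forall\ell\in[m],\ X\succeq 0\}$ with symmetric $n\times n$ matrices $C,A_1,\dots,A_m$ and $b\in\mathbb{R}^m$. For an $n\times n$ matrix $M$, $\mathrm{vec}(M)\in\mathbb{R}^{n^2}$ is obtained by stacking the columns of $M$; $\otimes$ is the Kronecker product. $\mathcal{A}$ is the $m\times n^2$ matrix whose $\ell$-th row is $\mathrm{vec}(A_\ell)^T$. A matrix $X$ is linearly feasible if $\mathcal{A}\,\mathrm{vec}(X)=b$. *)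

theory Defs
  imports "HOL-Analysis.Analysis"
begin

definition pos_def :: "real^'n^'n \<Rightarrow> bool" where
  "pos_def M \<longleftrightarrow> transpose M = M \<and> (\<forall>x. x \<noteq> 0 \<longrightarrow> x \<bullet> (M *v x) > 0)"

text \<open>Column-stacking vectorisation. The index (j,i) = (column, row); with the
  lexicographic order on pairs this is exactly the column stacking order.\<close>
definition vecm :: "real^'n^'n \<Rightarrow> real^('n \<times> 'n)" where
  "vecm M = (\<chi> p. M $ snd p $ fst p)"

text \<open>Kronecker product, with (block index, inner index) pair indexing, consistent with vecm.\<close>
definition kron :: "real^'n^'n \<Rightarrow> real^'n^'n \<Rightarrow> real^('n \<times> 'n)^('n \<times> 'n)" where
  "kron P Q = (\<chi> p q. P $ fst p $ fst q * Q $ snd p $ snd q)"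

definition constr_mat :: "('m \<Rightarrow> real^'n^'n) \<Rightarrow> real^('n \<times> 'n)^'m" where
  "constr_mat A = (\<chi> l. vecm (A l))"

end

theory Submission
  imports Defs
begin

definition frob :: "real^'n^'n \<Rightarrow> real^'n^'n \<Rightarrow> real" where
  "frob M N = (\<Sum>i\<in>UNIV. \<Sum>j\<in>UNIV. M$i$j * N$i$j)"

definition outer :: "real^'n \<Rightarrow> real^'n^'n" where
  "outer w = (\<chi> i j. w$i * w$j)"

lemma sum_pairs: "(\<Sum>p\<in>(UNIV::('a::finite\<times>'b::finite) set). f p) = (\<Sum>a\<in>UNIV. \<Sum>b\<in>UNIV. f (a,b))"
  by (simp add: sum.cartesian_product UNIV_Times_UNIV[symmetric] del: UNIV_Times_UNIV)

lemma vecm_inner: "vecm M \<bullet> vecm N = frob M N"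
proof -
  have "vecm M \<bullet> vecm N = (\<Sum>a\<in>UNIV. \<Sum>b\<in>UNIV. M$b$a * N$b$a)"
    by (simp add: inner_vec_def vecm_def sum_pairs)
  also have "\<dots> = (\<Sum>b\<in>UNIV. \<Sum>a\<in>UNIV. M$b$a * N$b$a)" by (rule sum.swap)
  finally show ?thesis by (simp add: frob_def)
qed

lemma vecm_add: "vecm (M + N) = vecm M + vecm N" by (simp add: vecm_def vec_eq_iff)
lemma vecm_diff: "vecm (M - N) = vecm M - vecm N" by (simp add: vecm_def vec_eq_iff)
lemma vecm_minus: "vecm (- M) = - vecm M" by (simp add: vecm_def vec_eq_iff)
lemma vecm_scale: "vecm (c *\<^sub>R M) = c *\<^sub>R vecm M" by (simp add: vecm_def vec_eq_iff)
lemma vecm_zero: "vecm 0 = 0" by (simp add: vecm_def vec_eq_iff)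
lemma vecm_sum: "vecm (\<Sum>l\<in>S. f l) = (\<Sum>l\<in>S. vecm (f l))"
  by (induction S rule: infinite_finite_induct) (simp_all add: vecm_add vecm_zero)
lemma vecm_inj: assumes h: "vecm M = vecm N" shows "M = N"
proof (subst vec_eq_iff, intro allI, subst vec_eq_iff, intro allI)
  fix i j
  have "vecm M $ (j,i) = vecm N $ (j,i)" using h by simp
  thus "M$i$j = N$i$j" by (simp add: vecm_def)
qed

lemma constr_apply: "constr_mat A *v v = (\<chi> l. vecm (A l) \<bullet> v)"
  by (simp add: constr_mat_def matrix_vector_mult_def inner_vec_def vec_eq_iff)

lemma constrT_apply: "transpose (constr_mat A) *v y = vecm (\<Sum>l\<in>UNIV. y$l *\<^sub>R A l)"
  by (simp add: constr_mat_def matrix_vector_mult_def transpose_def vecm_def vec_eq_iff sum_component mult.commute)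

lemma kron_apply: "kron P Q *v vecm M = vecm (Q ** M ** transpose P)"
  by (simp add: kron_def vecm_def matrix_vector_mult_def matrix_matrix_mult_def transpose_def
       vec_eq_iff sum_pairs sum_distrib_left sum_distrib_right mult_ac)

lemma inner_mv: fixes M :: "real^'n^'m" shows "x \<bullet> (M *v y) = (transpose M *v x) \<bullet> y"
  by (simp add: dot_lmul_matrix)

lemma inner_mv_sym: fixes M :: "real^'n^'n" shows "transpose M = M \<Longrightarrow> x \<bullet> (M *v y) = y \<bullet> (M *v x)"
  by (metis inner_commute inner_mv)

lemma frob_outer: "frob M (outer w) = w \<bullet> (M *v w)"
  by (simp add: frob_def outer_def matrix_vector_mult_def inner_vec_def sum_distrib_left mult_ac)

lemma frob_add2: "frob M (N1 + N2) = frob M N1 + frob M N2"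
  by (simp add: frob_def algebra_simps sum.distrib)
lemma frob_add1: "frob (M1 + M2) N = frob M1 N + frob M2 N"
  by (simp add: frob_def algebra_simps sum.distrib)
lemma frob_diff1: "frob (M1 - M2) N = frob M1 N - frob M2 N"
  by (simp add: frob_def algebra_simps sum_subtractf)
lemma frob_minus2: "frob M (- N) = - frob M N"
  by (simp add: frob_def sum_negf)
lemma frob_scale1: "frob (c *\<^sub>R M) N = c * frob M N"
  by (simp add: frob_def sum_distrib_left mult_ac)
lemma frob_zero2: "frob M 0 = 0" by (simp add: frob_def)
lemma frob_zero1: "frob 0 M = 0" by (simp add: frob_def)
lemma frob_sum2: "frob M (\<Sum>k\<in>S. N k) = (\<Sum>k\<in>S. frob M (N k))"
  by (induction S rule: infinite_finite_induct) (simp_all add: frob_add2 frob_zero2)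
lemma frob_sum1: "frob (\<Sum>k\<in>S. N k) M = (\<Sum>k\<in>S. frob (N k) M)"
  by (induction S rule: infinite_finite_induct) (simp_all add: frob_add1 frob_zero1)
lemma frob_comm: "frob M N = frob N M" by (simp add: frob_def mult.commute)

lemma qf_outer: "x \<bullet> (outer w *v x) = (w \<bullet> x)^2"
  by (simp add: outer_def matrix_vector_mult_def inner_vec_def power2_eq_square sum_distrib_left sum_distrib_right mult_ac)

lemma qf_sum_outer: "x \<bullet> ((\<Sum>k\<in>S. outer (W k)) *v x) = (\<Sum>k\<in>S. (W k \<bullet> x)^2)"
  by (induction S rule: infinite_finite_induct)
     (simp_all add: qf_outer matrix_vector_mult_add_rdistrib inner_add_right)

lemma axis_mv: fixes M :: "real^'n^'m" shows "axis i 1 \<bullet> (M *v axis j 1) = M$i$j"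
  by (simp add: matrix_vector_mult_basis inner_commute[of "axis i 1"] inner_axis column_def)

lemma psd_cs:
  fixes M :: "real^'n^'n"
  assumes sym: "transpose M = M" and psd: "\<forall>x. 0 \<le> x \<bullet> (M *v x)"
  shows "(a \<bullet> (M *v b))^2 \<le> (a \<bullet> (M *v a)) * (b \<bullet> (M *v b))"
proof -
  define p where "p = a \<bullet> (M *v a)"
  define q where "q = a \<bullet> (M *v b)"
  define r where "r = b \<bullet> (M *v b)"
  have ba: "b \<bullet> (M *v a) = q" unfolding q_def using inner_mv_sym[OF sym] by metis
  have key: "0 \<le> p + 2 * s * q + s^2 * r" for s
  proof -
    have "0 \<le> (a + s *\<^sub>R b) \<bullet> (M *v (a + s *\<^sub>R b))" using psd by blast
    also have "\<dots> = p + 2 * s * q + s^2 * r"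
      using ba by (simp add: p_def q_def r_def matrix_vector_right_distrib inner_add_left inner_add_right
          matrix_vector_mult_scaleR power2_eq_square algebra_simps)
    finally show ?thesis .
  qed
  have r0: "0 \<le> r" using psd r_def by blast
  show ?thesis
  proof (cases "r = 0")
    case True
    have "q = 0"
    proof (rule ccontr)
      assume "q \<noteq> 0"
      from key[of "-(p+1)/(2*q)"] True this show False by (simp add: field_simps)
    qed
    then show ?thesis using True by (simp add: p_def q_def r_def)
  next
    case False
    hence rp: "r > 0" using r0 by simp
    from key[of "-q/r"] have "0 \<le> p - q^2/r" using rp by (simp add: field_simps power2_eq_square)
    hence "q^2 \<le> p * r" using rp by (simp add: field_simps)
    thus ?thesis by (simp add: p_def q_def r_def)
  qed
qed

lemma symE: fixes M :: "real^'n^'n" assumes "transpose M = M" shows "M$a$b = M$b$a"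
proof -
  have "transpose M $ b $ a = M $ b $ a" using assms by simp
  thus ?thesis by (simp add: transpose_def)
qed

lemma outer_zero: "outer (0::real^'n) = 0" by (simp add: outer_def vec_eq_iff)

lemma psd_decomp_aux:
  fixes I :: "'n::finite set"
  assumes "finite I"
  shows "\<forall>M::real^'n^'n. transpose M = M \<and> (\<forall>x. 0 \<le> x \<bullet> (M *v x)) \<and> (\<forall>a j. a \<notin> I \<longrightarrow> M$a$j = 0)
           \<longrightarrow> (\<exists>W. M = (\<Sum>k\<in>I. outer (W k)))"
  using assms
proof (induction I rule: finite_induct)
  case empty
  show ?case
  proof (intro allI impI)
    fix M :: "real^'n^'n"
    assume "transpose M = M \<and> (\<forall>x. 0 \<le> x \<bullet> (M *v x)) \<and> (\<forall>a j. a \<notin> {} \<longrightarrow> M$a$j = 0)"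
    hence "M = 0" by (simp add: vec_eq_iff)
    thus "\<exists>W. M = (\<Sum>k\<in>{}. outer (W k))" by simp
  qed
next
  case (insert i I)
  show ?case
  proof (intro allI impI)
    fix M :: "real^'n^'n"
    assume H: "transpose M = M \<and> (\<forall>x. 0 \<le> x \<bullet> (M *v x)) \<and> (\<forall>a j. a \<notin> insert i I \<longrightarrow> M$a$j = 0)"
    hence sym: "transpose M = M" and psd: "\<forall>x. 0 \<le> x \<bullet> (M *v x)"
      and sup: "\<forall>a j. a \<notin> insert i I \<longrightarrow> M$a$j = 0" by auto
    define d where "d = M$i$i"
    have d_nn: "0 \<le> d" using psd[rule_format, of "axis i 1"] by (simp add: axis_mv d_def)
    show "\<exists>W. M = (\<Sum>k\<in>insert i I. outer (W k))"
    proof (cases "d = 0")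
      case True
      have row0: "M$i$j = 0" for j
      proof -
        have "(axis i 1 \<bullet> (M *v axis j 1))^2 \<le> (axis i 1 \<bullet> (M *v axis i 1)) * (axis j 1 \<bullet> (M *v axis j 1))"
          by (rule psd_cs[OF sym psd])
        hence "(M$i$j)^2 \<le> 0" using True by (simp add: axis_mv d_def)
        thus ?thesis by simp
      qed
      have "\<forall>a j. a \<notin> I \<longrightarrow> M$a$j = 0"
      proof (intro allI impI)
        fix a j assume "a \<notin> I"
        thus "M$a$j = 0" by (cases "a = i") (use sup row0 in auto)
      qed
      then obtain W where W: "M = (\<Sum>k\<in>I. outer (W k))" using insert.IH sym psd by blast
      have "(\<Sum>k\<in>I. outer ((W(i:=0)) k)) = (\<Sum>k\<in>I. outer (W k))"
        by (rule sum.cong) (use insert.hyps in auto)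
      hence "(\<Sum>k\<in>insert i I. outer ((W(i:=0)) k)) = M"
        using insert.hyps W by (simp add: outer_zero)
      thus ?thesis by metis
    next
      case False
      hence dp: "0 < d" using d_nn by simp
      define r where "r = (\<chi> j. M$i$j)"
      define w where "w = (1/sqrt d) *\<^sub>R r"
      have sq: "(1/sqrt d)^2 = 1/d" using dp by (simp add: power_divide)
      have ow: "outer w $a$b = M$i$a * M$i$b / d" for a b
      proof -
        have "outer w $a$b = (1/sqrt d)^2 * (M$i$a * M$i$b)"
          by (simp add: outer_def w_def r_def power2_eq_square mult_ac)
        thus ?thesis using sq by simp
      qed
      define M' where "M' = M - outer w"
      have sym': "transpose M' = M'"
        by (simp add: M'_def vec_eq_iff transpose_def ow symE[OF sym, of _ i] mult.commute)
          (metis symE[OF sym])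
      have psd': "\<forall>x. 0 \<le> x \<bullet> (M' *v x)"
      proof
        fix x :: "real^'n"
        define c where "c = (M *v x)$i"
        define t where "t = c/d"
        define z where "z = x - t *\<^sub>R axis i 1"
        have rx: "w \<bullet> x = (1/sqrt d) * c"
          by (simp add: w_def r_def c_def inner_vec_def matrix_vector_mult_def sum_divide_distrib)
        have e1: "x \<bullet> (M' *v x) = x \<bullet> (M *v x) - c^2/d"
          using dp by (simp add: M'_def matrix_vector_mult_diff_rdistrib inner_diff_right qf_outer rx
              power_divide)
        have ax1: "axis i 1 \<bullet> (M *v x) = c" by (simp add: c_def inner_commute[of "axis i 1"] inner_axis)
        have ax2: "x \<bullet> (M *v axis i 1) = c" using ax1 inner_mv_sym[OF sym] by metis
        have ax3: "axis i 1 \<bullet> (M *v axis i 1) = d" by (simp add: axis_mv d_def)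
        have "z \<bullet> (M *v z) = x \<bullet> (M *v x) - 2*t*c + t^2*d"
          by (simp add: z_def matrix_vector_mult_diff_distrib matrix_vector_mult_scaleR inner_diff_left
              inner_diff_right ax1 ax2 ax3 power2_eq_square algebra_simps)
        also have "\<dots> = x \<bullet> (M *v x) - c^2/d" using dp by (simp add: t_def field_simps power2_eq_square)
        finally have e2: "z \<bullet> (M *v z) = x \<bullet> (M *v x) - c^2/d" .
        show "0 \<le> x \<bullet> (M' *v x)" using e1 e2 psd by metis
      qed
      have sup': "\<forall>a j. a \<notin> I \<longrightarrow> M'$a$j = 0"
      proof (intro allI impI)
        fix a j assume aI: "a \<notin> I"
        show "M'$a$j = 0"
        proof (cases "a = i")
          case True
          thus ?thesis using dp by (simp add: M'_def ow d_def)
        next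
          case False
          hence "M$a$j = 0" "M$i$a = 0" using sup aI symE[OF sym, of i a] by auto
          thus ?thesis by (simp add: M'_def ow)
        qed
      qed
      obtain W where W: "M' = (\<Sum>k\<in>I. outer (W k))" using insert.IH sym' psd' sup' by blast
      have "(\<Sum>k\<in>I. outer ((W(i:=w)) k)) = (\<Sum>k\<in>I. outer (W k))"
        by (rule sum.cong) (use insert.hyps in auto)
      hence "(\<Sum>k\<in>insert i I. outer ((W(i:=w)) k)) = M"
        using insert.hyps W by (simp add: M'_def algebra_simps)
      thus ?thesis by metis
    qed
  qed
qed

lemma psd_decomp:
  fixes M :: "real^'n^'n"
  assumes "transpose M = M" "\<forall>x. 0 \<le> x \<bullet> (M *v x)"
  shows "\<exists>W::'n \<Rightarrow> real^'n. M = (\<Sum>k\<in>UNIV. outer (W k))"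
proof -
  have "\<forall>a j. a \<notin> (UNIV::'n set) \<longrightarrow> M$a$j = 0" by simp
  hence h: "transpose M = M \<and> (\<forall>x. 0 \<le> x \<bullet> (M *v x)) \<and> (\<forall>a j. a \<notin> (UNIV::'n set) \<longrightarrow> M$a$j = 0)"
    using assms by simp
  have f: "finite (UNIV::'n set)" by simp
  note th = psd_decomp_aux[OF f]
  show ?thesis using th h by presburger
qed

definition outer2 :: "real^'n \<Rightarrow> real^'n \<Rightarrow> real^'n^'n" where
  "outer2 a b = (\<chi> i j. a$i * b$j)"

lemma outer_eq: "outer w = outer2 w w" by (simp add: outer_def outer2_def)

lemma mm_add_r: "((B::real^'n^'m) + C) ** A = B ** A + C ** A"
  by (vector matrix_matrix_mult_def sum.distrib[symmetric] field_simps)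

lemma mm_sum_l: "(\<Sum>k\<in>S. F k) ** (N::real^'n^'n) = (\<Sum>k\<in>S. F k ** N)"
  by (induction S rule: infinite_finite_induct) (simp_all add: mm_add_r)

lemma mm_sum_r: "(N::real^'n^'n) ** (\<Sum>k\<in>S. F k) = (\<Sum>k\<in>S. N ** F k)"
  by (induction S rule: infinite_finite_induct) (simp_all add: matrix_add_ldistrib)

lemma o2_mul_l: "outer2 a a' ** (N::real^'n^'n) = outer2 a (transpose N *v a')"
  by (simp add: outer2_def matrix_matrix_mult_def matrix_vector_mult_def transpose_def vec_eq_iff
      sum_distrib_left mult_ac)

lemma o2_mul_o2: "outer2 a c ** outer2 b b' = (c \<bullet> b) *\<^sub>R outer2 a b'"
  by (simp add: outer2_def matrix_matrix_mult_def inner_vec_def vec_eq_iff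
      sum_distrib_left sum_distrib_right mult_ac)

lemma o2_mul: "outer2 a a' ** N ** outer2 b b' = (a' \<bullet> (N *v b)) *\<^sub>R outer2 a b'"
proof -
  have "outer2 a a' ** N ** outer2 b b' = ((transpose N *v a') \<bullet> b) *\<^sub>R outer2 a b'"
    by (simp only: o2_mul_l[of a a' N] o2_mul_o2)
  also have "(transpose N *v a') \<bullet> b = a' \<bullet> (N *v b)" by (rule inner_mv[symmetric])
  finally show ?thesis .
qed

lemma frob_o2: "frob M (outer2 a b) = a \<bullet> (M *v b)"
  by (simp add: frob_def outer2_def matrix_vector_mult_def inner_vec_def sum_distrib_left mult_ac)

lemma frob_scale2: "frob M (c *\<^sub>R N) = c * frob M N"
  by (simp add: frob_def sum_distrib_left mult_ac)

lemma XNX_formula: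
  fixes W :: "'k \<Rightarrow> real^'n"
  assumes X: "X = (\<Sum>k\<in>UNIV. outer (W k))" and fin: "finite (UNIV::'k set)"
  shows "X ** N ** X = (\<Sum>j\<in>UNIV. \<Sum>k\<in>UNIV. (W j \<bullet> (N *v W k)) *\<^sub>R outer2 (W j) (W k))"
proof -
  have "X ** N ** X = (\<Sum>j\<in>UNIV. outer2 (W j) (W j) ** N) ** (\<Sum>k\<in>UNIV. outer2 (W k) (W k))"
    by (simp add: X outer_eq mm_sum_l)
  also have "\<dots> = (\<Sum>j\<in>UNIV. \<Sum>k\<in>UNIV. outer2 (W j) (W j) ** N ** outer2 (W k) (W k))"
    apply (simp add: mm_sum_l mm_sum_r) by (rule sum.swap)
  also have "\<dots> = (\<Sum>j\<in>UNIV. \<Sum>k\<in>UNIV. (W j \<bullet> (N *v W k)) *\<^sub>R outer2 (W j) (W k))"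
    by (simp add: o2_mul)
  finally show ?thesis .
qed

lemma frob_XNX:
  fixes W :: "'k \<Rightarrow> real^'n"
  assumes X: "X = (\<Sum>k\<in>UNIV. outer (W k))" and fin: "finite (UNIV::'k set)"
  shows "frob M (X ** N ** X) = (\<Sum>j\<in>UNIV. \<Sum>k\<in>UNIV. (W j \<bullet> (N *v W k)) * (W j \<bullet> (M *v W k)))"
  by (simp add: XNX_formula[OF X fin] frob_sum2 frob_scale2 frob_o2)

lemma frob_X:
  assumes X: "X = (\<Sum>k\<in>UNIV. outer (W k))"
  shows "frob M X = (\<Sum>k\<in>UNIV. W k \<bullet> (M *v W k))"
  by (simp add: X frob_sum2 frob_outer)

lemma pd_inv: "pos_def X \<Longrightarrow> invertible X"
  unfolding invertible_left_inverse matrix_left_invertible_ker pos_def_def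
  by (metis inner_zero_right less_irrefl)

lemma inv_facts:
  assumes "invertible (X::real^'n^'n)"
  shows "X ** matrix_inv X = mat 1" "matrix_inv X ** X = mat 1"
proof -
  have "\<exists>X'. X ** X' = mat 1 \<and> X' ** X = mat 1" using assms by (simp add: invertible_def)
  hence "X ** matrix_inv X = mat 1 \<and> matrix_inv X ** X = mat 1"
    unfolding matrix_inv_def by (rule someI_ex)
  thus "X ** matrix_inv X = mat 1" "matrix_inv X ** X = mat 1" by auto
qed

lemma XBX_zero:
  assumes "invertible (X::real^'n^'n)" "X ** B ** X = 0"
  shows "B = 0"
proof -
  have "B = (matrix_inv X ** X) ** B ** (X ** matrix_inv X)" using inv_facts[OF assms(1)] by simp
  also have "\<dots> = matrix_inv X ** (X ** B ** X) ** matrix_inv X" by (simp add: matrix_mul_assoc)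
  also have "\<dots> = 0" using assms(2) by simp
  finally show ?thesis .
qed

lemma mm_diff_l: "(X::real^'n^'m) ** (B - C) = X ** B - X ** C"
  by (vector matrix_matrix_mult_def sum_subtractf field_simps)
lemma mm_diff_r: "((B::real^'n^'m) - C) ** X = B ** X - C ** X"
  by (vector matrix_matrix_mult_def sum_subtractf field_simps)

lemma neg_mv: "(- (M::real^'n^'m)) *v x = - (M *v x)"
  by (simp add: matrix_vector_mult_def vec_eq_iff sum_negf)

lemma inner_constr: "y \<bullet> (constr_mat A *v vecm M) = frob (\<Sum>l\<in>UNIV. y$l *\<^sub>R A l) M"
proof -
  have "y \<bullet> (constr_mat A *v vecm M) = (\<Sum>l\<in>UNIV. y$l * frob (A l) M)"
    unfolding constr_apply vecm_inner by (simp add: inner_vec_def)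
  also have "\<dots> = frob (\<Sum>l\<in>UNIV. y$l *\<^sub>R A l) M" by (simp add: frob_sum1 frob_scale1)
  finally show ?thesis .
qed

lemma indep_zero:
  fixes A :: "'m::finite \<Rightarrow> real^'n^'n"
  assumes inj: "inj A" and ind: "independent (range A)" and z: "(\<Sum>l\<in>UNIV. y$l *\<^sub>R A l) = 0"
  shows "y = 0"
proof -
  define u where "u = (\<lambda>v. y $ (inv A v))"
  have "(\<Sum>v\<in>range A. u v *\<^sub>R v) = (\<Sum>l\<in>UNIV. u (A l) *\<^sub>R A l)"
    using inj by (simp add: sum.reindex)
  also have "\<dots> = (\<Sum>l\<in>UNIV. y$l *\<^sub>R A l)" using inj by (simp add: u_def)
  finally have s0: "(\<Sum>v\<in>range A. u v *\<^sub>R v) = 0" using z by simp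
  have "u (A l) = 0" for l
    by (rule independentD[OF ind _ _ s0]) auto
  thus ?thesis using inj by (simp add: u_def vec_eq_iff)
qed

locale sdp =
  fixes C :: "real^'n^'n" and A :: "'m::finite \<Rightarrow> real^'n^'n"
  assumes C_sym: "transpose C = C"
    and A_sym: "\<forall>l. transpose (A l) = A l"
    and A_inj: "inj A" and A_ind: "independent (range A)"
begin

definition Am where "Am = constr_mat A"
definition Gk where "Gk X = kron X X"
definition Hm where "Hm X = Am ** Gk X ** transpose Am"
definition yv where "yv X = matrix_inv (Hm X) *v (Am *v (Gk X *v vecm C))"
definition Bm where "Bm X = (\<Sum>l\<in>UNIV. yv X $ l *\<^sub>R A l)"
definition Sm where "Sm X = C - Bm X"

lemma A_swap: "A l $ j $ i = A l $ i $ j"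
  by (rule symE) (use A_sym in auto)

lemma Bm_sym: "transpose (Bm X) = Bm X"
  by (simp add: Bm_def vec_eq_iff transpose_def sum_component A_swap)

lemma Sm_sym: "transpose (Sm X) = Sm X"
proof -
  have "transpose (Sm X) = transpose C - transpose (Bm X)"
    by (simp add: Sm_def vec_eq_iff transpose_def)
  thus ?thesis using Bm_sym C_sym by (simp add: Sm_def)
qed

lemma dyn_form:
  assumes dyn: "vecm Xd = - ((mat 1 - Gk X ** transpose Am ** matrix_inv (Am ** Gk X ** transpose Am) ** Am)
                 ** Gk X) *v vecm C"
  shows "Xd = - (X ** Sm X ** transpose X)"
proof -
  let ?G = "Gk X" let ?P = "?G ** transpose Am ** matrix_inv (Hm X) ** Am"
  have GC: "?G *v vecm C = vecm (X ** C ** transpose X)" by (simp only: Gk_def kron_apply)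
  have "?P *v (?G *v vecm C) = ?G *v (transpose Am *v yv X)"
    by (simp only: yv_def matrix_vector_mul_assoc[symmetric])
  also have "transpose Am *v yv X = vecm (Bm X)" by (simp only: Am_def Bm_def constrT_apply)
  also have "?G *v vecm (Bm X) = vecm (X ** Bm X ** transpose X)" by (simp only: Gk_def kron_apply)
  finally have PG0: "?P *v (?G *v vecm C) = vecm (X ** Bm X ** transpose X)" .
  hence PG: "?P *v vecm (X ** C ** transpose X) = vecm (X ** Bm X ** transpose X)" by (simp only: GC)
  have "vecm Xd = - ((mat 1 - ?P) ** ?G) *v vecm C" using dyn by (simp only: Hm_def)
  also have "\<dots> = - (?G *v vecm C - ?P *v (?G *v vecm C))"
    by (simp only: matrix_vector_mul_assoc[symmetric] matrix_vector_mult_diff_rdistrib matrix_vector_mul_lid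
        neg_mv)
  also have "\<dots> = vecm (- (X ** Sm X ** transpose X))"
    by (simp only: GC PG Sm_def mm_diff_l mm_diff_r vecm_minus vecm_diff)
  finally show ?thesis by (rule vecm_inj)
qed

end

lemma pd_psd: "pos_def X \<Longrightarrow> \<forall>x. 0 \<le> x \<bullet> (X *v x)"
  unfolding pos_def_def by (metis inner_zero_left matrix_vector_mult_0_right order_less_imp_le order_refl)

lemma pd_sym: "pos_def X \<Longrightarrow> transpose X = X" unfolding pos_def_def by blast

lemma sum0: fixes g :: "'a::finite \<Rightarrow> real"
  assumes "sum g UNIV = 0" "\<forall>j. 0 \<le> g j" shows "g j = 0"
  using assms sum_nonneg_eq_0_iff[of UNIV g] by auto

context sdp begin

lemma frob_Bm: "frob (Bm X) M = yv X \<bullet> (Am *v vecm M)"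
  by (simp add: Bm_def Am_def inner_constr)

lemma feas_zero:
  assumes inv: "invertible (Hm X)" and sym: "transpose X = X"
  shows "Am *v vecm (X ** Sm X ** X) = 0"
proof -
  define z where "z = Am *v (Gk X *v vecm C)"
  have GC: "Gk X *v vecm C = vecm (X ** C ** X)" by (simp only: Gk_def kron_apply sym)
  have GB: "Gk X *v vecm (Bm X) = vecm (X ** Bm X ** X)" by (simp only: Gk_def kron_apply sym)
  have TB: "transpose Am *v yv X = vecm (Bm X)" by (simp only: Am_def Bm_def constrT_apply)
  have "Am *v vecm (X ** Bm X ** X) = Am *v (Gk X *v (transpose Am *v yv X))"
    by (simp only: GB TB)
  also have "\<dots> = Hm X *v yv X" by (simp only: Hm_def matrix_vector_mul_assoc matrix_mul_assoc)
  also have "\<dots> = (Hm X ** matrix_inv (Hm X)) *v z" by (simp only: yv_def z_def matrix_vector_mul_assoc matrix_mul_assoc)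
  also have "\<dots> = z" using inv_facts[OF inv] by simp
  finally have e1: "Am *v vecm (X ** Bm X ** X) = z" .
  have e2: "Am *v vecm (X ** C ** X) = z" by (simp only: z_def GC)
  show ?thesis
    by (simp only: Sm_def mm_diff_l mm_diff_r vecm_diff matrix_vector_mult_diff_distrib e1 e2 diff_self)
qed

lemma Hm_inv:
  assumes pd: "pos_def X"
  shows "invertible (Hm X)"
  unfolding invertible_left_inverse matrix_left_invertible_ker
proof (intro allI impI)
  fix x assume h: "Hm X *v x = 0"
  define B where "B = (\<Sum>l\<in>UNIV. x$l *\<^sub>R A l)"
  have sym: "transpose X = X" using pd pd_sym by blast
  obtain W :: "'n \<Rightarrow> real^'n" where W: "X = (\<Sum>k\<in>UNIV. outer (W k))"
    using psd_decomp[OF sym pd_psd[OF pd]] by blast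
  have TB: "transpose Am *v x = vecm B" by (simp only: Am_def B_def constrT_apply)
  have "0 = x \<bullet> (Hm X *v x)" using h by simp
  also have "\<dots> = x \<bullet> (Am *v vecm (X ** B ** X))"
    by (simp only: Hm_def matrix_vector_mul_assoc[symmetric] TB Gk_def kron_apply sym)
  also have "\<dots> = frob B (X ** B ** X)" by (simp only: Am_def B_def inner_constr)
  also have "\<dots> = (\<Sum>j\<in>UNIV. \<Sum>k\<in>UNIV. (W j \<bullet> (B *v W k)) * (W j \<bullet> (B *v W k)))"
    by (rule frob_XNX[OF W]) simp
  finally have s0: "(\<Sum>j\<in>UNIV. \<Sum>k\<in>UNIV. (W j \<bullet> (B *v W k)) * (W j \<bullet> (B *v W k))) = 0" by simp
  have z: "W j \<bullet> (B *v W k) = 0" for j k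
  proof -
    have nn: "\<And>j. 0 \<le> (\<Sum>k\<in>UNIV. (W j \<bullet> (B *v W k)) * (W j \<bullet> (B *v W k)))"
      by (intro sum_nonneg) simp
    have "(\<Sum>k\<in>UNIV. (W j \<bullet> (B *v W k)) * (W j \<bullet> (B *v W k))) = 0"
      by (rule sum0[OF s0]) (use nn in blast)
    hence "(W j \<bullet> (B *v W k)) * (W j \<bullet> (B *v W k)) = 0"
      by (rule sum0) simp
    thus ?thesis by simp
  qed
  have "X ** B ** X = 0" by (simp add: XNX_formula[OF W] z)
  hence "B = 0" using XBX_zero pd_inv[OF pd] by blast
  thus "x = 0" using indep_zero[OF A_inj A_ind, of x] unfolding B_def by simp
qed

lemma frobC_XSX:
  assumes pd: "pos_def X"
  shows "frob C (X ** Sm X ** X) = frob (Sm X) (X ** Sm X ** X)"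
proof -
  have "frob (Bm X) (X ** Sm X ** X) = 0"
    using feas_zero[OF Hm_inv[OF pd] pd_sym[OF pd]] by (simp add: frob_Bm)
  thus ?thesis by (simp add: Sm_def frob_diff1)
qed

lemma key_ineq:
  assumes pd: "pos_def X"
  shows "2 * frob (Sm X) X \<le> real CARD('n) + frob (Sm X) (X ** Sm X ** X)"
    and "0 \<le> frob (Sm X) (X ** Sm X ** X)"
proof -
  have sym: "transpose X = X" using pd pd_sym by blast
  obtain W :: "'n \<Rightarrow> real^'n" where W: "X = (\<Sum>k\<in>UNIV. outer (W k))"
    using psd_decomp[OF sym pd_psd[OF pd]] by blast
  let ?S = "Sm X"
  define a where "a = (\<lambda>j k. W j \<bullet> (?S *v W k))"
  have q: "frob ?S (X ** ?S ** X) = (\<Sum>j\<in>UNIV. \<Sum>k\<in>UNIV. a j k * a j k)"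
    unfolding a_def by (rule frob_XNX[OF W]) simp
  have l: "frob ?S X = (\<Sum>j\<in>UNIV. a j j)" unfolding a_def by (rule frob_X[OF W])
  have d: "a j j * a j j \<le> (\<Sum>k\<in>UNIV. a j k * a j k)" for j
    by (rule member_le_sum) auto
  have "2 * frob ?S X = (\<Sum>j\<in>UNIV. 2 * a j j)" by (simp add: l sum_distrib_left)
  also have "\<dots> \<le> (\<Sum>j\<in>UNIV. 1 + a j j * a j j)"
  proof (rule sum_mono)
    fix j :: 'n
    have "0 \<le> (a j j - 1)^2" by simp
    thus "2 * a j j \<le> 1 + a j j * a j j" by (simp add: power2_eq_square algebra_simps)
  qed
  also have "\<dots> = real CARD('n) + (\<Sum>j\<in>UNIV. a j j * a j j)" by (simp add: sum.distrib)
  also have "\<dots> \<le> real CARD('n) + frob ?S (X ** ?S ** X)"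
    unfolding q using d by (simp add: sum_mono)
  finally show "2 * frob (Sm X) X \<le> real CARD('n) + frob (Sm X) (X ** Sm X ** X)" .
  show "0 \<le> frob (Sm X) (X ** Sm X ** X)" unfolding q by (intro sum_nonneg) simp
qed

lemma frob_psd_nonneg:
  fixes X M :: "real^'n^'n"
  assumes pd: "pos_def X" and Mpsd: "\<forall>x. 0 \<le> x \<bullet> (M *v x)"
  shows "0 \<le> frob M X"
proof -
  obtain W :: "'n \<Rightarrow> real^'n" where W: "X = (\<Sum>k\<in>UNIV. outer (W k))"
    using psd_decomp[OF pd_sym[OF pd] pd_psd[OF pd]] by blast
  show ?thesis unfolding frob_X[OF W] using Mpsd by (simp add: sum_nonneg)
qed

end

lemma det_tendsto:
  fixes f :: "'a \<Rightarrow> real^'n^'n"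
  assumes "\<And>i j. ((\<lambda>s. f s $ i $ j) \<longlongrightarrow> L $ i $ j) F"
  shows "((\<lambda>s. det (f s)) \<longlongrightarrow> det L) F"
  unfolding det_def by (intro tendsto_intros assms)

lemma inv_cramer:
  fixes M :: "real^'n^'n"
  assumes inv: "invertible M"
  shows "matrix_inv M *v w = (\<chi> k. det (\<chi> i j. if j = k then w$i else M$i$j) / det M)"
proof -
  have d: "det M \<noteq> 0" using inv invertible_det_nz by blast
  have "M *v (matrix_inv M *v w) = w"
    using inv_facts[OF inv] by (simp add: matrix_vector_mul_assoc)
  thus ?thesis using cramer[OF d] by blast
qed

lemma comp_deriv:
  fixes X :: "real \<Rightarrow> real^'n^'n"
  assumes "(X has_vector_derivative X') F"
  shows "((\<lambda>s. X s $ i $ j) has_real_derivative X' $ i $ j) F"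
proof -
  have bl: "bounded_linear (\<lambda>M::real^'n^'n. M $ i $ j)"
    by (rule bounded_linear_compose[OF bounded_linear_vec_nth[of j] bounded_linear_vec_nth[of i]])
  show ?thesis unfolding has_real_derivative_iff_has_vector_derivative
    using bounded_linear.has_vector_derivative[OF bl assms] .
qed

lemma phi_deriv:
  fixes X Xd :: "real \<Rightarrow> real^'n^'n" and D :: "real set" and w :: "real^'n"
  assumes inv: "\<forall>s\<in>D. invertible (X s)" and sym: "\<forall>s\<in>D. transpose (X s) = X s"
    and der: "(X has_vector_derivative Xd t) (at t within D)" and t: "t \<in> D"
  shows "((\<lambda>s. w \<bullet> (matrix_inv (X s) *v w)) has_real_derivative
           - ((matrix_inv (X t) *v w) \<bullet> (Xd t *v (matrix_inv (X t) *v w)))) (at t within D)"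
proof -
  define u where "u s = matrix_inv (X s) *v w" for s
  have Xu: "X s *v u s = w" if "s \<in> D" for s
    using inv_facts[of "X s"] inv that by (simp add: u_def matrix_vector_mul_assoc)
  have ev: "eventually (\<lambda>s. s \<in> D \<and> s \<noteq> t) (at t within D)"
    by (auto simp: eventually_at_filter)
  have cX: "((\<lambda>s. X s) \<longlongrightarrow> X t) (at t within D)"
    using has_vector_derivative_continuous[OF der] continuous_within by blast
  have cXc: "((\<lambda>s. X s $ i $ j) \<longlongrightarrow> X t $ i $ j) (at t within D)" for i j
    by (intro tendsto_intros cX)
  have dt: "det (X t) \<noteq> 0" using inv t invertible_det_nz by blast
  have uc: "((\<lambda>s. u s $ k) \<longlongrightarrow> u t $ k) (at t within D)" for k
  proof -
    define N where "N s = (\<chi> i j. if j = k then w$i else X s$i$j)" for s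
    have e: "u s $ k = det (N s) / det (X s)" if "s \<in> D" for s
      using inv_cramer[of "X s" w] inv that by (simp add: u_def N_def)
    have "((\<lambda>s. det (N s) / det (X s)) \<longlongrightarrow> det (N t) / det (X t)) (at t within D)"
    proof (intro tendsto_divide det_tendsto dt)
      show "((\<lambda>s. N s $ i $ j) \<longlongrightarrow> N t $ i $ j) (at t within D)" for i j
        by (cases "j = k") (simp_all add: N_def cXc)
      show "((\<lambda>s. X s $ i $ j) \<longlongrightarrow> X t $ i $ j) (at t within D)" for i j by (rule cXc)
    qed
    moreover have "eventually (\<lambda>s. det (N s) / det (X s) = u s $ k) (at t within D)"
      using ev by eventually_elim (simp add: e)
    ultimately have "((\<lambda>s. u s $ k) \<longlongrightarrow> det (N t) / det (X t)) (at t within D)"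
      by (rule Lim_transform_eventually)
    thus ?thesis using e[OF t] by simp
  qed
  have quot: "((\<lambda>s. (X s $ i $ j - X t $ i $ j) / (s - t)) \<longlongrightarrow> Xd t $ i $ j) (at t within D)" for i j
    using comp_deriv[OF der, of i j] by (simp add: has_field_derivative_iff)
  define L where "L = - (\<Sum>i\<in>UNIV. \<Sum>j\<in>UNIV. u t $ i * Xd t $ i $ j * u t $ j)"
  have lim: "((\<lambda>s. - (\<Sum>i\<in>UNIV. \<Sum>j\<in>UNIV. u t $ i * ((X s $ i $ j - X t $ i $ j) / (s - t)) * u s $ j))
             \<longlongrightarrow> L) (at t within D)"
    unfolding L_def by (intro tendsto_intros quot uc)
  have eqd: "(w \<bullet> u s - w \<bullet> u t) / (s - t)
      = - (\<Sum>i\<in>UNIV. \<Sum>j\<in>UNIV. u t $ i * ((X s $ i $ j - X t $ i $ j) / (s - t)) * u s $ j)"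
    if s: "s \<in> D" for s
  proof -
    have a: "w \<bullet> u s = u t \<bullet> (X t *v u s)"
      using Xu[OF t] inner_mv_sym[of "X t" "u s" "u t"] sym t by (metis inner_commute)
    have b: "w \<bullet> u t = u t \<bullet> (X s *v u s)"
      using Xu[OF s] by (simp add: inner_commute)
    have f: "w \<bullet> u s - w \<bullet> u t = - (u t \<bullet> ((X s - X t) *v u s))"
      by (simp add: a b matrix_vector_mult_diff_rdistrib inner_diff_right)
    have c: "(u t \<bullet> ((X s - X t) *v u s)) / (s - t)
        = (\<Sum>i\<in>UNIV. \<Sum>j\<in>UNIV. u t $ i * ((X s $ i $ j - X t $ i $ j) / (s - t)) * u s $ j)"
      by (simp add: inner_vec_def matrix_vector_mult_def sum_distrib_left sum_divide_distrib mult_ac)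
    have "(w \<bullet> u s - w \<bullet> u t) / (s - t) = - ((u t \<bullet> ((X s - X t) *v u s)) / (s - t))"
      by (simp only: f minus_divide_left)
    also have "\<dots> = - (\<Sum>i\<in>UNIV. \<Sum>j\<in>UNIV. u t $ i * ((X s $ i $ j - X t $ i $ j) / (s - t)) * u s $ j)"
      by (simp only: c)
    finally show ?thesis .
  qed
  have "eventually (\<lambda>s. - (\<Sum>i\<in>UNIV. \<Sum>j\<in>UNIV. u t $ i * ((X s $ i $ j - X t $ i $ j) / (s - t)) * u s $ j)
          = (w \<bullet> u s - w \<bullet> u t) / (s - t)) (at t within D)"
    using ev by eventually_elim (simp add: eqd)
  with lim have "((\<lambda>s. (w \<bullet> u s - w \<bullet> u t) / (s - t)) \<longlongrightarrow> L) (at t within D)"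
    by (rule Lim_transform_eventually)
  moreover have "L = - (u t \<bullet> (Xd t *v u t))"
    by (simp add: L_def inner_vec_def matrix_vector_mult_def sum_distrib_left mult_ac)
  ultimately show ?thesis
    by (simp add: has_field_derivative_iff u_def)
qed

lemma frob_deriv:
  fixes X :: "real \<Rightarrow> real^'n^'n"
  assumes "(X has_vector_derivative X') (at t within S)"
  shows "((\<lambda>s. frob M (X s)) has_real_derivative frob M X') (at t within S)"
  unfolding frob_def
  by (intro DERIV_sum DERIV_cmult comp_deriv assms)

lemma const_lemma:
  fixes g :: "real \<Rightarrow> real"
  assumes S: "convex S" and d: "\<forall>x\<in>S. (g has_real_derivative 0) (at x within S)"
    and x: "x \<in> S" and y: "y \<in> S"
  shows "g x = g y"
proof -
  have "\<exists>c. \<forall>x\<in>S. g x = c"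
  proof (rule has_derivative_zero_constant[OF S])
    fix x assume "x \<in> S"
    hence "(g has_derivative (*) 0) (at x within S)" using d by (simp add: has_field_derivative_def)
    moreover have e: "(*) (0::real) = (\<lambda>h. 0)" by (rule ext) simp
    ultimately show "(g has_derivative (\<lambda>h. 0)) (at x within S)" by simp
  qed
  thus ?thesis using x y by auto
qed

lemma mono_lemma:
  fixes F :: "real \<Rightarrow> real"
  assumes d: "\<forall>s\<in>{0..<T}. \<exists>d. (F has_real_derivative d) (at s within {0..<T}) \<and> d \<le> 0"
    and t0: "0 \<le> t0" "t0 < T"
  shows "F t0 \<le> F 0"
proof (rule DERIV_nonpos_imp_decreasing_open[OF t0(1)])
  fix x assume x: "0 < x" "x < t0"
  have xD: "x \<in> {0..<T}" using x t0 by auto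
  obtain d where dd: "(F has_real_derivative d) (at x within {0..<T})" "d \<le> 0" using d xD by blast
  have "(F has_real_derivative d) (at x within {0<..<T})"
    by (rule has_field_derivative_subset[OF dd(1)]) auto
  moreover have "at x within {0<..<T} = at x" by (rule at_within_open) (use x t0 in auto)
  ultimately show "\<exists>y. DERIV F x :> y \<and> y \<le> 0" using dd(2) by auto
next
  show "continuous_on {0..t0} F"
  proof (subst continuous_on_eq_continuous_within, intro ballI)
    fix x assume x: "x \<in> {0..t0}"
    then obtain d where dd: "(F has_real_derivative d) (at x within {0..<T})" using d t0 by fastforce
    have "continuous (at x within {0..<T}) F" by (rule DERIV_continuous[OF dd])
    thus "continuous (at x within {0..t0}) F"
      by (rule continuous_within_subset) (use t0 in auto)
  qed
qed

lemma qf_scale: "(c *\<^sub>R v) \<bullet> (M *v (c *\<^sub>R v)) = c^2 * (v \<bullet> (M *v v))"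
  for M :: "real^'n^'n"
  by (simp add: matrix_vector_mult_scaleR power2_eq_square)

lemma pd_uniform:
  fixes M :: "real^'n^'n"
  assumes pd: "pos_def M"
  shows "\<exists>k>0. \<forall>v. k * (norm v)^2 \<le> v \<bullet> (M *v v)"
proof -
  let ?f = "\<lambda>v::real^'n. v \<bullet> (M *v v)"
  have ne: "sphere (0::real^'n) 1 \<noteq> {}"
  proof -
    obtain i :: 'n where True by blast
    have "axis i (1::real) \<in> sphere 0 1" by (simp add: norm_axis_1)
    thus ?thesis by blast
  qed
  have co: "continuous_on (sphere 0 1) ?f" by (intro continuous_intros)
  obtain x where x: "x \<in> sphere 0 1" "\<forall>y\<in>sphere 0 1. ?f x \<le> ?f y"
    using continuous_attains_inf[OF compact_sphere ne co] by blast
  have x0: "x \<noteq> 0" using x(1) by auto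
  have kp: "0 < ?f x" using pd x0 unfolding pos_def_def by blast
  show ?thesis
  proof (intro exI conjI allI)
    show "0 < ?f x" by (rule kp)
    fix v :: "real^'n"
    show "?f x * (norm v)^2 \<le> v \<bullet> (M *v v)"
    proof (cases "v = 0")
      case True thus ?thesis by simp
    next
      case False
      hence nv: "0 < norm v" by simp
      define u where "u = (1 / norm v) *\<^sub>R v"
      have u1: "u \<in> sphere 0 1" using nv by (simp add: u_def)
      have vu: "v = norm v *\<^sub>R u" using nv by (simp add: u_def)
      have "?f x * (norm v)^2 \<le> ?f u * (norm v)^2"
        using x(2) u1 by (intro mult_right_mono) auto
      also have "\<dots> = v \<bullet> (M *v v)"
      proof -
        have "v \<bullet> (M *v v) = (norm v)^2 * ?f u" using qf_scale[of "norm v" u M] vu by simp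
        thus ?thesis by (simp add: mult.commute)
      qed
      finally show ?thesis .
    qed
  qed
qed

lemma qf_bound:
  fixes D :: "real^'n^'n"
  shows "\<bar>v \<bullet> (D *v v)\<bar> \<le> real CARD('n) * real CARD('n) * norm D * (norm v)^2"
proof -
  have bl: "bounded_linear ((*v) D)" by simp
  have c1: "\<bar>v \<bullet> (D *v v)\<bar> \<le> norm v * norm (D *v v)" by (rule Cauchy_Schwarz_ineq2)
  have c2: "norm (D *v v) \<le> (\<Sum>i\<in>UNIV. \<Sum>j\<in>UNIV. \<bar>D$i$j\<bar>) * norm v"
    using onorm[OF bl] onorm_le_matrix_component_sum[of D] 
    by (meson mult_right_mono norm_ge_zero order_trans)
  have c3: "(\<Sum>i\<in>UNIV. \<Sum>j\<in>UNIV. \<bar>D$i$j\<bar>) \<le> real CARD('n) * real CARD('n) * norm D"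
  proof -
    have "\<bar>D$i$j\<bar> \<le> norm D" for i j
      using component_le_norm_cart[of "D$i" j] Finite_Cartesian_Product.norm_nth_le[of D i] by linarith
    hence "(\<Sum>i\<in>UNIV. \<Sum>j\<in>UNIV. \<bar>D$i$j\<bar>) \<le> (\<Sum>i\<in>(UNIV::'n set). \<Sum>j\<in>(UNIV::'n set). norm D)"
      by (intro sum_mono) auto
    thus ?thesis by simp
  qed
  have "norm v * norm (D *v v) \<le> norm v * ((real CARD('n) * real CARD('n) * norm D) * norm v)"
  proof (rule mult_left_mono)
    have "(\<Sum>i\<in>UNIV. \<Sum>j\<in>UNIV. \<bar>D$i$j\<bar>) * norm v \<le> (real CARD('n) * real CARD('n) * norm D) * norm v"
      using c3 by (rule mult_right_mono) simp
    thus "norm (D *v v) \<le> (real CARD('n) * real CARD('n) * norm D) * norm v" using c2 by linarith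
  qed simp
  thus ?thesis using c1 by (simp add: power2_eq_square mult_ac)
qed

lemma transpose_neg: "transpose (- M) = - transpose (M::real^'n^'n)"
  by (simp add: transpose_def vec_eq_iff)

context sdp begin

lemma Am_comp: "(Am *v vecm M) $ l = frob (A l) M"
  by (simp add: Am_def constr_apply vecm_inner)

lemma bound:
  fixes X Xd :: "real \<Rightarrow> real^'n^'n" and T :: real
  assumes C_pd: "pos_def C"
    and T: "0 < T"
    and pd: "\<forall>s\<in>{0..<T}. pos_def (X s)"
    and feas: "\<forall>s\<in>{0..<T}. Am *v vecm (X s) = Am *v vecm (X 0)"
    and XdF: "\<forall>s\<in>{0..<T}. Xd s = - (X s ** Sm (X s) ** X s)"
    and der: "\<forall>s\<in>{0..<T}. (X has_vector_derivative Xd s) (at s within {0..<T})"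
  shows "\<exists>\<kappa>>0. \<forall>s\<in>{0..<T}. \<forall>v. \<kappa> * (norm v)^2 \<le> v \<bullet> (X s *v v)"
proof -
  let ?D = "{0..<T}"
  have D0: "0 \<in> ?D" using T by simp
  have X0pd: "pos_def (X 0)" using pd D0 by blast
  obtain W0 :: "'n \<Rightarrow> real^'n" where W0: "X 0 = (\<Sum>k\<in>UNIV. outer (W0 k))"
    using psd_decomp[OF pd_sym[OF X0pd] pd_psd[OF X0pd]] by blast
  obtain k0 where k0: "k0 > 0" "\<forall>v. k0 * (norm v)^2 \<le> v \<bullet> (X 0 *v v)"
    using pd_uniform[OF X0pd] by blast
  define u where "u s k = matrix_inv (X s) *v W0 k" for s k
  define Phi where "Phi = (\<lambda>s. (\<Sum>k\<in>UNIV. W0 k \<bullet> (matrix_inv (X s) *v W0 k)))"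
  define psi where "psi = (\<lambda>s. frob C (X s))"
  define K where "K = frob C (X 0) + real CARD('n) / 2"
  define F where "F = (\<lambda>s. Phi s + psi s / 2 - K * s)"
  have inv: "\<forall>s\<in>?D. invertible (X s)" using pd pd_inv by blast
  have sym: "\<forall>s\<in>?D. transpose (X s) = X s" using pd pd_sym by blast
  have Xu: "X s *v u s k = W0 k" if "s \<in> ?D" for s k
    using inv_facts[of "X s"] inv that by (simp add: u_def matrix_vector_mul_assoc)
  have uXu: "u s k \<bullet> (X s *v u s k) = W0 k \<bullet> u s k" if "s \<in> ?D" for s k
    using Xu[OF that] by (simp add: inner_commute)
  have dF: "\<exists>d. (F has_real_derivative d) (at s within ?D) \<and> d \<le> 0" if s: "s \<in> ?D" for s
  proof -
    let ?X = "X s" let ?S = "Sm (X s)"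
    have pds: "pos_def ?X" using pd s by blast
    have dPhi: "(Phi has_real_derivative (\<Sum>k\<in>UNIV. - (u s k \<bullet> (Xd s *v u s k)))) (at s within ?D)"
      unfolding Phi_def u_def
      by (intro DERIV_sum phi_deriv[where X=X and Xd=Xd and D="{0..<T}" and t=s, OF inv sym der[rule_format, OF s] s])
    have e1: "- (u s k \<bullet> (Xd s *v u s k)) = W0 k \<bullet> (?S *v W0 k)" for k
    proof -
      have "- (u s k \<bullet> (Xd s *v u s k)) = u s k \<bullet> (?X *v (?S *v (?X *v u s k)))"
        using XdF s by (simp add: neg_mv matrix_vector_mul_assoc[symmetric])
      also have "\<dots> = (?S *v (?X *v u s k)) \<bullet> (?X *v u s k)"
        using inner_mv_sym[of ?X "u s k" "?S *v (?X *v u s k)"] sym s by simp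
      also have "\<dots> = W0 k \<bullet> (?S *v W0 k)" by (simp add: inner_commute Xu[OF s])
      finally show ?thesis .
    qed
    have dPhi': "(Phi has_real_derivative frob ?S (X 0)) (at s within ?D)"
      using dPhi by (simp add: e1 frob_X[OF W0])
    have dpsi0: "(psi has_real_derivative frob C (Xd s)) (at s within ?D)"
      unfolding psi_def by (rule frob_deriv[OF der[rule_format, OF s]])
    have "frob C (Xd s) = - frob ?S (?X ** ?S ** ?X)"
      using XdF s frobC_XSX[OF pds] by (simp add: frob_minus2)
    hence dpsi: "(psi has_real_derivative - frob ?S (?X ** ?S ** ?X)) (at s within ?D)"
      using dpsi0 by simp
    have dF: "(F has_real_derivative frob ?S (X 0) + (- frob ?S (?X ** ?S ** ?X)) / 2 - K * 1) (at s within ?D)"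
      unfolding F_def by (rule DERIV_diff[OF DERIV_add[OF dPhi' DERIV_cdivide[OF dpsi]] DERIV_cmult[OF DERIV_ident]])
    have fb: "frob ?S (X 0) = frob C (X 0) - frob C ?X + frob ?S ?X"
    proof -
      have "frob (Bm ?X) (X 0) = yv ?X \<bullet> (Am *v vecm (X 0))" by (rule frob_Bm)
      also have "\<dots> = yv ?X \<bullet> (Am *v vecm ?X)" by (simp only: feas[rule_format, OF s])
      also have "\<dots> = frob (Bm ?X) ?X" by (rule frob_Bm[symmetric])
      finally have "frob (Bm ?X) (X 0) = frob (Bm ?X) ?X" .
      thus ?thesis by (simp add: Sm_def frob_diff1)
    qed
    have ki: "2 * frob ?S ?X \<le> real CARD('n) + frob ?S (?X ** ?S ** ?X)" by (rule key_ineq(1)[OF pds])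
    have cn: "0 \<le> frob C ?X" by (rule frob_psd_nonneg[OF pds pd_psd[OF C_pd]])
    have "frob ?S (X 0) + (- frob ?S (?X ** ?S ** ?X)) / 2 - K * 1 \<le> 0"
      using fb ki cn unfolding K_def by (simp only: mult_1_right)
    thus ?thesis using dF by blast
  qed
  have Fle: "F s \<le> F 0" if "s \<in> ?D" for s
    by (rule mono_lemma) (use dF that in auto)
  have psi_nn: "0 \<le> psi s" if "s \<in> ?D" for s
    using frob_psd_nonneg[OF _ pd_psd[OF C_pd], of "X s"] pd that by (simp add: psi_def)
  have Kn: "0 \<le> K" using frob_psd_nonneg[OF X0pd pd_psd[OF C_pd]] by (simp add: K_def)
  define R where "R = max 1 (F 0 + K * T)"
  have PhiR: "Phi s \<le> R" if s: "s \<in> ?D" for s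
  proof -
    have "Phi s = F s - psi s / 2 + K * s" by (simp add: F_def)
    also have "\<dots> \<le> F 0 + K * T"
    proof -
      have "K * s \<le> K * T" using Kn s by (intro mult_left_mono) auto
      thus ?thesis using Fle[OF s] psi_nn[OF s] by linarith
    qed
    also have "\<dots> \<le> R" by (simp add: R_def)
    finally show ?thesis .
  qed
  have Rp: "0 < R" by (simp add: R_def)
  show ?thesis
  proof (intro exI conjI ballI allI)
    show "0 < k0 / R" using k0 Rp by simp
    fix s v assume s: "s \<in> ?D"
    have pds: "pos_def (X s)" using pd s by blast
    have vXv: "0 \<le> v \<bullet> (X s *v v)" using pd_psd[OF pds] by blast
    have cs: "(W0 k \<bullet> v)^2 \<le> (W0 k \<bullet> u s k) * (v \<bullet> (X s *v v))" for k
    proof -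
      have "(u s k \<bullet> (X s *v v))^2 \<le> (u s k \<bullet> (X s *v u s k)) * (v \<bullet> (X s *v v))"
        by (rule psd_cs[OF pd_sym[OF pds] pd_psd[OF pds]])
      moreover have "u s k \<bullet> (X s *v v) = W0 k \<bullet> v"
        using inner_mv_sym[of "X s" "u s k" v] sym s Xu[OF s, of k] by (simp add: inner_commute)
      ultimately show ?thesis using uXu[OF s, of k] by simp
    qed
    have "k0 * (norm v)^2 \<le> v \<bullet> (X 0 *v v)" using k0 by blast
    also have "\<dots> = (\<Sum>k\<in>UNIV. (W0 k \<bullet> v)^2)" by (simp add: W0 qf_sum_outer)
    also have "\<dots> \<le> (\<Sum>k\<in>UNIV. (W0 k \<bullet> u s k) * (v \<bullet> (X s *v v)))" by (rule sum_mono) (rule cs)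
    also have "\<dots> = Phi s * (v \<bullet> (X s *v v))" by (simp add: Phi_def u_def sum_distrib_right)
    also have "\<dots> \<le> R * (v \<bullet> (X s *v v))" using PhiR[OF s] vXv by (rule mult_right_mono)
    finally have "k0 * (norm v)^2 \<le> R * (v \<bullet> (X s *v v))" .
    thus "k0 / R * (norm v)^2 \<le> v \<bullet> (X s *v v)" using Rp by (simp add: field_simps)
  qed
qed

end

context sdp begin

lemma main:
  fixes X Xd :: "real \<Rightarrow> real^'n^'n" and b :: "real^'m"
  assumes C_pd: "pos_def C"
    and deriv: "\<forall>t\<ge>0. (X has_vector_derivative Xd t) (at t within {0..})"
    and dyn: "\<forall>t\<ge>0. vecm (Xd t) =
       - ((mat 1 - kron (X t) (X t) ** transpose (constr_mat A)
              ** matrix_inv (constr_mat A ** kron (X t) (X t) ** transpose (constr_mat A))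
              ** constr_mat A)
          ** kron (X t) (X t)) *v vecm C"
    and X0_pd: "pos_def (X 0)"
    and X0_feas: "constr_mat A *v vecm (X 0) = b"
  shows "\<forall>t\<ge>0. pos_def (X t) \<and> constr_mat A *v vecm (X t) = b"
proof -
  have XdG: "Xd t = - (X t ** Sm (X t) ** transpose (X t))" if "0 \<le> t" for t
    using dyn_form[where X="X t" and Xd="Xd t"] dyn that unfolding Gk_def Am_def by blast
  have Xd_sym: "transpose (Xd t) = Xd t" if "0 \<le> t" for t
    using XdG[OF that] by (simp add: transpose_neg matrix_transpose_mul Sm_sym matrix_mul_assoc)
  have X_sym: "transpose (X t) = X t" if t: "0 \<le> t" for t
  proof -
    have "X t $ i $ j = X t $ j $ i" for i j
    proof -
      define g where "g = (\<lambda>s. X s $ i $ j - X s $ j $ i)"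
      have "\<forall>x\<in>{0..}. (g has_real_derivative 0) (at x within {0..})"
      proof
        fix x :: real assume x: "x \<in> {0..}"
        have "(g has_real_derivative Xd x $ i $ j - Xd x $ j $ i) (at x within {0..})"
          unfolding g_def using deriv x by (intro DERIV_diff comp_deriv) auto
        moreover have "Xd x $ i $ j - Xd x $ j $ i = 0" using symE[OF Xd_sym, of x i j] x by simp
        ultimately show "(g has_real_derivative 0) (at x within {0..})" by simp
      qed
      hence "g t = g 0" by (rule const_lemma[rotated]) (use t in auto)
      moreover have "g 0 = 0" using symE[OF pd_sym[OF X0_pd], of i j] by (simp add: g_def)
      ultimately show ?thesis by (simp add: g_def)
    qed
    thus ?thesis by (simp add: vec_eq_iff transpose_def)
  qed
  have XdF: "Xd t = - (X t ** Sm (X t) ** X t)" if "0 \<le> t" for t using XdG[OF that] by (simp only: X_sym[OF that])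
  have feas: "Am *v vecm (X t1) = Am *v vecm (X 0)"
    if t1: "0 \<le> t1" and pdI: "\<forall>s\<in>{0..t1}. pos_def (X s)" for t1
  proof -
    have "(Am *v vecm (X t1)) $ l = (Am *v vecm (X 0)) $ l" for l
    proof -
      define g where "g = (\<lambda>s. frob (A l) (X s))"
      have "\<forall>x\<in>{0..t1}. (g has_real_derivative 0) (at x within {0..t1})"
      proof
        fix x assume x: "x \<in> {0..t1}"
        have dx: "(X has_vector_derivative Xd x) (at x within {0..t1})"
        proof (rule has_vector_derivative_within_subset)
          show "(X has_vector_derivative Xd x) (at x within {0..})" using deriv x by simp
          show "{0..t1} \<subseteq> {0..}" by auto
        qed
        have "(g has_real_derivative frob (A l) (Xd x)) (at x within {0..t1})"
          unfolding g_def by (rule frob_deriv[OF dx])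
        moreover have "frob (A l) (Xd x) = 0"
        proof -
          have pdx: "pos_def (X x)" using pdI x by blast
          have "frob (A l) (X x ** Sm (X x) ** X x) = (Am *v vecm (X x ** Sm (X x) ** X x)) $ l"
            by (simp add: Am_comp)
          also have "\<dots> = 0" using feas_zero[OF Hm_inv[OF pdx] pd_sym[OF pdx]] by simp
          finally show ?thesis using XdF[of x] x by (simp add: frob_minus2)
        qed
        ultimately show "(g has_real_derivative 0) (at x within {0..t1})" by simp
      qed
      hence "g t1 = g 0" by (rule const_lemma[rotated]) (use t1 in auto)
      thus ?thesis by (simp add: g_def Am_comp)
    qed
    thus ?thesis by (simp add: vec_eq_iff)
  qed
  have allpd: "\<forall>t\<ge>0. pos_def (X t)"
  proof (rule ccontr)
    assume nall: "\<not> (\<forall>t\<ge>0. pos_def (X t))"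
    define Bad where "Bad = {t. 0 \<le> t \<and> \<not> pos_def (X t)}"
    have ne: "Bad \<noteq> {}" using nall by (auto simp: Bad_def)
    define T where "T = Inf Bad"
    have bdd: "bdd_below Bad" unfolding Bad_def by (rule bdd_belowI[of _ 0]) auto
    have T0: "0 \<le> T" unfolding T_def by (rule cInf_greatest[OF ne]) (auto simp: Bad_def)
    have pdb: "pos_def (X s)" if "0 \<le> s" "s < T" for s
    proof (rule ccontr)
      assume "\<not> pos_def (X s)"
      hence "s \<in> Bad" using that by (auto simp: Bad_def)
      hence "T \<le> s" unfolding T_def by (rule cInf_lower[OF _ bdd])
      thus False using that by simp
    qed
    obtain k0 where k0: "0 < k0" "\<forall>v. k0 * (norm v)^2 \<le> v \<bullet> (X 0 *v v)"
      using pd_uniform[OF X0_pd] by blast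
    define N where "N = real CARD('n) * real CARD('n)"
    have Npos: "0 < N" by (simp add: N_def)
    have qb: "\<bar>v \<bullet> (D *v v)\<bar> \<le> N * norm D * (norm v)^2" for v and D :: "real^'n^'n"
      unfolding N_def by (rule qf_bound)
    have cont: "\<forall>e>0. \<exists>d>0. \<forall>s\<in>{0..}. dist s T < d \<longrightarrow> dist (X s) (X T) < e"
      using has_vector_derivative_continuous[OF deriv[rule_format, OF T0]]
      unfolding continuous_within_eps_delta by blast
    have diffq: "v \<bullet> (X s *v v) = v \<bullet> (X T *v v) + v \<bullet> ((X s - X T) *v v)" for s v
      by (simp add: matrix_vector_mult_diff_rdistrib inner_diff_right)
    obtain k where k: "0 < k" "\<forall>v. k * (norm v)^2 \<le> v \<bullet> (X T *v v)"
    proof (cases "T = 0")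
      case True thus ?thesis using k0 that by auto
    next
      case False
      hence Tp: "0 < T" using T0 by simp
      have "\<exists>\<kappa>>0. \<forall>s\<in>{0..<T}. \<forall>v. \<kappa> * (norm v)^2 \<le> v \<bullet> (X s *v v)"
      proof (rule bound[OF C_pd Tp])
        show "\<forall>s\<in>{0..<T}. pos_def (X s)" using pdb by auto
        show "\<forall>s\<in>{0..<T}. Am *v vecm (X s) = Am *v vecm (X 0)"
        proof
          fix s assume s: "s \<in> {0..<T}"
          show "Am *v vecm (X s) = Am *v vecm (X 0)"
            by (rule feas) (use s pdb in auto)
        qed
        show "\<forall>s\<in>{0..<T}. Xd s = - (X s ** Sm (X s) ** X s)" using XdF by auto
        show "\<forall>s\<in>{0..<T}. (X has_vector_derivative Xd s) (at s within {0..<T})"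
        proof
          fix s assume s: "s \<in> {0..<T}"
          show "(X has_vector_derivative Xd s) (at s within {0..<T})"
          proof (rule has_vector_derivative_within_subset)
            show "(X has_vector_derivative Xd s) (at s within {0..})" using deriv s by simp
            show "{0..<T} \<subseteq> {0..}" by auto
          qed
        qed
      qed
      then obtain \<kappa> where ka: "0 < \<kappa>" "\<forall>s\<in>{0..<T}. \<forall>v. \<kappa> * (norm v)^2 \<le> v \<bullet> (X s *v v)"
        by blast
      have "\<forall>v. \<kappa> * (norm v)^2 \<le> v \<bullet> (X T *v v)"
      proof (rule allI, rule ccontr)
        fix v :: "real^'n"
        assume nl: "\<not> \<kappa> * (norm v)^2 \<le> v \<bullet> (X T *v v)"
        define e where "e = \<kappa> * (norm v)^2 - v \<bullet> (X T *v v)"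
        have ep: "0 < e" using nl by (simp add: e_def)
        define M where "M = N * (norm v)^2 + 1"
        have "0 \<le> N * (norm v)^2" using Npos by (intro mult_nonneg_nonneg) auto
        hence Mp: "0 < M" by (simp add: M_def)
        define eps where "eps = e / M"
        have epsp: "0 < eps" using ep Mp by (simp add: eps_def)
        obtain d where d: "0 < d" "\<forall>s\<in>{0..}. dist s T < d \<longrightarrow> dist (X s) (X T) < eps"
          using cont epsp by blast
        define s where "s = max 0 (T - d/2)"
        have s0: "0 \<le> s" "s < T" "dist s T < d" using d(1) Tp by (auto simp: s_def dist_real_def)
        have nX: "norm (X s - X T) < eps" using d(2) s0 by (simp add: dist_norm)
        have "v \<bullet> ((X s - X T) *v v) \<le> N * norm (X s - X T) * (norm v)^2"
          using qb[of v "X s - X T"] by linarith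
        also have "\<dots> \<le> N * eps * (norm v)^2"
          using nX Npos by (intro mult_right_mono mult_left_mono) auto
        also have "\<dots> < e"
        proof -
          have "N * eps * (norm v)^2 = e * (N * (norm v)^2) / M" by (simp add: eps_def)
          also have "\<dots> < e" using ep Mp by (simp add: M_def field_simps)
          finally show ?thesis .
        qed
        finally have "v \<bullet> (X s *v v) < \<kappa> * (norm v)^2" using diffq[of v s] by (simp add: e_def)
        moreover have "\<kappa> * (norm v)^2 \<le> v \<bullet> (X s *v v)" using ka(2) s0 by auto
        ultimately show False by simp
      qed
      thus ?thesis using ka(1) that by blast
    qed
    define eps where "eps = k / (2 * N)"
    have epsp: "0 < eps" using k(1) Npos by (simp add: eps_def)
    obtain d where d: "0 < d" "\<forall>s\<in>{0..}. dist s T < d \<longrightarrow> dist (X s) (X T) < eps"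
      using cont epsp by blast
    have pdT: "pos_def (X s)" if s: "0 \<le> s" "s < T + d" for s
    proof (cases "s < T")
      case True thus ?thesis using pdb s by simp
    next
      case False
      hence ds: "dist s T < d" using s by (simp add: dist_real_def)
      have nX: "norm (X s - X T) < eps" using d(2) s ds by (simp add: dist_norm)
      show ?thesis unfolding pos_def_def
      proof (intro conjI allI impI)
        show "transpose (X s) = X s" by (rule X_sym[OF s(1)])
        fix v :: "real^'n" assume v0: "v \<noteq> 0"
        have "- (v \<bullet> ((X s - X T) *v v)) \<le> N * norm (X s - X T) * (norm v)^2"
          using qb[of v "X s - X T"] by linarith
        also have "\<dots> \<le> N * eps * (norm v)^2"
          using nX Npos by (intro mult_right_mono mult_left_mono) auto
        also have "\<dots> = (k * (norm v)^2) / 2" using Npos by (simp add: eps_def)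
        finally have h1: "- (v \<bullet> ((X s - X T) *v v)) \<le> (k * (norm v)^2) / 2" .
        have h2: "k * (norm v)^2 \<le> v \<bullet> (X T *v v)" using k(2) by blast
        have h3: "0 < k * (norm v)^2" using v0 k(1) by simp
        show "0 < v \<bullet> (X s *v v)" using diffq[of v s] h1 h2 h3 by linarith
      qed
    qed
    have "T + d \<le> Inf Bad"
    proof (rule cInf_greatest[OF ne])
      fix x assume "x \<in> Bad"
      hence x: "0 \<le> x" "\<not> pos_def (X x)" by (auto simp: Bad_def)
      show "T + d \<le> x"
      proof (rule ccontr)
        assume "\<not> T + d \<le> x"
        hence "pos_def (X x)" using pdT x(1) by simp
        thus False using x(2) by simp
      qed
    qed
    thus False using d(1) by (simp add: T_def)
  qed
  show ?thesis
  proof (intro allI impI conjI)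
    fix t :: real assume t: "0 \<le> t"
    show "pos_def (X t)" using allpd t by blast
    have "Am *v vecm (X t) = Am *v vecm (X 0)" by (rule feas[OF t]) (use allpd in auto)
    thus "constr_mat A *v vecm (X t) = b" using X0_feas by (simp add: Am_def)
  qed
qed

end

theorem theorem5p2:
  fixes C :: "real^'n^'n" and A :: "'m::finite \<Rightarrow> real^'n^'n" and b :: "real^'m"
    and X Xd :: "real \<Rightarrow> real^'n^'n"
  assumes C_sym: "transpose C = C"
    and A_sym: "\<forall>l. transpose (A l) = A l"
    and C_pd: "pos_def C"
    and A_indep: "inj A \<and> independent (range A)"
    and deriv: "\<forall>t\<ge>0. (X has_vector_derivative Xd t) (at t within {0..})"
    and dyn: "\<forall>t\<ge>0. vecm (Xd t) =
       - ((mat 1 - kron (X t) (X t) ** transpose (constr_mat A)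
              ** matrix_inv (constr_mat A ** kron (X t) (X t) ** transpose (constr_mat A))
              ** constr_mat A)
          ** kron (X t) (X t)) *v vecm C"
    and X0_pd: "pos_def (X 0)"
    and X0_feas: "constr_mat A *v vecm (X 0) = b"
  shows "\<forall>t\<ge>0. pos_def (X t) \<and> constr_mat A *v vecm (X t) = b"
proof -
  have inj: "inj A" and ind: "independent (range A)" using A_indep by auto
  interpret sdp C A by unfold_locales (use C_sym A_sym inj ind in auto)
  show ?thesis by (rule main[OF C_pd deriv dyn X0_pd X0_feas])
qed

end
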